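(* Let $r\ge0$ be real, $\ell,q\ge0$ integers, and $\mathcal B=(\mathcal L,\mathcal Q)$ a quadratic factor on $G=\mathbb{F}_p^n$ of complexity $(\ell,q)$ and rank at least $r$. Then the number of $(w_1,w_2,w_3,w_4)\in G^4$ for which the family of vectors $\mathcal L\cup\{Mw_1,Mw_2,Mw_3,Mw_4:M\in\mathcal Q\}$ is not linearly independent is at most $14p^{4n+\ell+4q-r}$.
   Context: $p$ is an odd prime. A linear factor of complexity $\ell\ge1$ is a linearly independent set $\mathcal L=\{r_1,\dots,r_\ell\}\subseteq\mathbb{F}_p^n$ ($\emptyset$ if $\ell=0$); a purely quadratic factor of complexity $q\ge1$ is a set $\mathcal Q=\{M_1,\dots,M_q\}$ of pairwise distinct symmetric $n\times n$ matrices over $\mathbb{F}_p$ ($\emptyset$ if $q=0$), with rank $n$ if $q=0$ and otherwise $\min\{\mathrm{rk}(\sum_i\lambda_iM_i):(\lambda_i)\ne0\}$. A quadratic factor of complexity $(\ell,q)$ is a pair $(\mathcal L,\mathcal Q)$; its rank is the rank of $\mathcal Q$. "Linearly independent" refers to the family (list) of vectors, so repeated or zero vectors count as a dependence. *)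

theory Defs
  imports "HOL-Analysis.Analysis"
begin

text \<open>Linear independence of a family (list) of vectors: repeated or zero
entries count as a dependence.\<close>
definition lin_indep_list :: "('a::field ^ 'n) list \<Rightarrow> bool" where
  "lin_indep_list vs \<longleftrightarrow>
     (\<forall>c :: nat \<Rightarrow> 'a. (\<Sum>i<length vs. c i *s (vs ! i)) = 0 \<longrightarrow> (\<forall>i<length vs. c i = 0))"

text \<open>Linear combination of a list of matrices with coefficients lam.\<close>
definition mat_comb :: "(nat \<Rightarrow> 'a::field) \<Rightarrow> ('a ^ 'n ^ 'n) list \<Rightarrow> 'a ^ 'n ^ 'n" where
  "mat_comb lam Qs = (\<chi> i j. \<Sum>k<length Qs. lam k * (Qs ! k) $ i $ j)"

text \<open>Rank of a purely quadratic factor: n if empty, else the minimal rank of a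
nontrivial linear combination.\<close>
definition qf_rank :: "('a::field ^ 'n ^ 'n) list \<Rightarrow> nat" where
  "qf_rank Qs = (if Qs = [] then CARD('n)
     else Min {rank (mat_comb lam Qs) | lam. \<exists>k<length Qs. lam k \<noteq> 0})"

text \<open>Quadratic factor (L, Q): L linearly independent, Q pairwise distinct
symmetric matrices. Complexity is (length L, length Q).\<close>
definition quadratic_factor :: "('a::field ^ 'n) list \<Rightarrow> ('a ^ 'n ^ 'n) list \<Rightarrow> bool" where
  "quadratic_factor Ls Qs \<longleftrightarrow> lin_indep_list Ls \<and> distinct Qs \<and>
     (\<forall>M \<in> set Qs. transpose M = M)"

end

theory Submission
  imports Defs
begin


definition dotv :: "'a::field^'n \<Rightarrow> 'a^'n \<Rightarrow> 'a" where
  "dotv u x = (\<Sum>i\<in>UNIV. u$i * x$i)"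

lemma dotv_add_r: "dotv u (x + y) = dotv u x + dotv u y"
  by (simp add: dotv_def sum.distrib distrib_left)
lemma dotv_diff_r: "dotv u (x - y) = dotv u x - dotv u y"
  by (simp add: dotv_def sum_subtractf right_diff_distrib)
lemma dotv_scale_r: "dotv u (a *s x) = a * dotv u x"
  by (simp add: dotv_def sum_distrib_left algebra_simps)
lemma dotv_add_l: "dotv (u + v) x = dotv u x + dotv v x"
  by (simp add: dotv_def sum.distrib distrib_right)
lemma dotv_diff_l: "dotv (u - v) x = dotv u x - dotv v x"
  by (simp add: dotv_def sum_subtractf left_diff_distrib)
lemma dotv_scale_l: "dotv (a *s u) x = a * dotv u x"
  by (simp add: dotv_def sum_distrib_left algebra_simps)
lemma dotv_zero_l: "dotv 0 x = 0"
  by (simp add: dotv_def)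
lemma dotv_axis: "dotv u (axis i 1) = u $ i"
  by (simp add: dotv_def axis_def if_distrib cong: if_cong)

lemma subspace_annih: "vec.subspace {u. dotv u x = 0}"
  by (auto simp: vec.subspace_def dotv_add_l dotv_scale_l dotv_zero_l)

lemma annih_span:
  fixes B :: "('a::field^'n) set"
  assumes "finite B" "\<forall>x. (\<forall>b'\<in>B. dotv b' x = 0) \<longrightarrow> dotv b x = 0"
  shows "b \<in> vec.span B"
  using assms
proof (induction B arbitrary: b rule: finite_induct)
  case empty
  then have "b = 0" by (simp add: vec_eq_iff) (metis dotv_axis)
  then show ?case by (simp add: vec.span_zero)
next
  case (insert c C)
  show ?case
  proof (cases "\<forall>x. (\<forall>b'\<in>C. dotv b' x = 0) \<longrightarrow> dotv c x = 0")
    case True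
    have "\<forall>x. (\<forall>b'\<in>C. dotv b' x = 0) \<longrightarrow> dotv b x = 0"
      using True insert.prems by auto
    then have "b \<in> vec.span C" using insert.IH by blast
    then show ?thesis by (meson subsetD subset_insertI vec.span_mono)
  next
    case False
    then obtain x0 where x0: "\<forall>b'\<in>C. dotv b' x0 = 0" "dotv c x0 \<noteq> 0" by blast
    define x1 where "x1 = (1 / dotv c x0) *s x0"
    have x1: "\<forall>b'\<in>C. dotv b' x1 = 0" "dotv c x1 = 1"
      using x0 by (auto simp: x1_def dotv_scale_r)
    define b' where "b' = b - dotv b x1 *s c"
    have "\<forall>x. (\<forall>b''\<in>C. dotv b'' x = 0) \<longrightarrow> dotv b' x = 0"
    proof (intro allI impI)
      fix x assume hx: "\<forall>b''\<in>C. dotv b'' x = 0"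
      define y where "y = x - dotv c x *s x1"
      have "\<forall>b''\<in>C. dotv b'' y = 0" using hx x1
        by (simp add: y_def dotv_diff_r dotv_scale_r)
      moreover have "dotv c y = 0" using x1 by (simp add: y_def dotv_diff_r dotv_scale_r)
      ultimately have "dotv b y = 0" using insert.prems by auto
      then show "dotv b' x = 0"
        by (simp add: y_def b'_def dotv_diff_r dotv_scale_r dotv_diff_l dotv_scale_l algebra_simps)
    qed
    then have "b' \<in> vec.span C" using insert.IH by blast
    then have "b' \<in> vec.span (insert c C)" by (meson subsetD subset_insertI vec.span_mono)
    moreover have "dotv b x1 *s c \<in> vec.span (insert c C)"
      by (simp add: vec.span_base vec.span_scale)
    ultimately have "b' + dotv b x1 *s c \<in> vec.span (insert c C)" by (rule vec.span_add)
    then show ?thesis by (simp add: b'_def)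
  qed
qed

definition annS :: "('a::field^'n) set \<Rightarrow> ('a^'n) set" where
  "annS B = {x. \<forall>b\<in>B. dotv b x = 0}"

lemma card_fibers:
  fixes f :: "'b \<Rightarrow> 'c::finite"
  assumes "finite A"
  shows "card A = (\<Sum>t\<in>UNIV. card {x\<in>A. f x = t})"
proof -
  have "A = (\<Union>t\<in>UNIV. {x\<in>A. f x = t})" by auto
  then have "card A = card (\<Union>t\<in>UNIV. {x\<in>A. f x = t})" by simp
  also have "\<dots> = (\<Sum>t\<in>UNIV. card {x\<in>A. f x = t})"
    by (rule card_UN_disjoint) (use assms in auto)
  finally show ?thesis .
qed

lemma card_annS:
  fixes B :: "('a::{field,finite}^'n) set"
  assumes "finite B" "vec.independent B"
  shows "card (annS B) * CARD('a) ^ card B = CARD('a) ^ CARD('n)"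
  using assms
proof (induction B rule: finite_induct)
  case empty
  have "annS ({}::('a^'n) set) = UNIV" by (simp add: annS_def)
  then show ?case by simp
next
  case (insert c C)
  have indC: "vec.independent C" and cn: "c \<notin> vec.span C"
    using insert.prems insert.hyps by (auto simp: vec.independent_insert)
  then have IH: "card (annS C) * CARD('a) ^ card C = CARD('a) ^ CARD('n)"
    using insert.IH by blast
  obtain x0 where x0: "\<forall>b'\<in>C. dotv b' x0 = 0" "dotv c x0 \<noteq> 0"
    using annih_span[OF insert.hyps(1), of c] cn by blast
  define x1 where "x1 = (1 / dotv c x0) *s x0"
  have x1: "\<forall>b'\<in>C. dotv b' x1 = 0" "dotv c x1 = 1"
    using x0 by (auto simp: x1_def dotv_scale_r)
  have fib: "card {x\<in>annS C. dotv c x = t} = card (annS (insert c C))" for t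
  proof -
    have "{x\<in>annS C. dotv c x = t} = (\<lambda>x. x + t *s x1) ` annS (insert c C)"
    proof
      show "{x\<in>annS C. dotv c x = t} \<subseteq> (\<lambda>x. x + t *s x1) ` annS (insert c C)"
      proof
        fix y assume "y \<in> {x\<in>annS C. dotv c x = t}"
        then have y: "y \<in> annS C" "dotv c y = t" by auto
        have "y - t *s x1 \<in> annS (insert c C)"
          using y x1 by (simp add: annS_def dotv_diff_r dotv_scale_r)
        then show "y \<in> (\<lambda>x. x + t *s x1) ` annS (insert c C)"
          by (rule rev_image_eqI) simp
      qed
    next
      show "(\<lambda>x. x + t *s x1) ` annS (insert c C) \<subseteq> {x\<in>annS C. dotv c x = t}"
        using x1 by (auto simp: annS_def dotv_add_r dotv_scale_r)
    qed
    moreover have "inj_on (\<lambda>x. x + t *s x1) (annS (insert c C))"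
      by (auto simp: inj_on_def)
    ultimately show ?thesis by (simp add: card_image)
  qed
  have "card (annS C) = (\<Sum>t\<in>(UNIV::'a set). card {x\<in>annS C. dotv c x = t})"
    by (rule card_fibers) simp
  also have "\<dots> = CARD('a) * card (annS (insert c C))" by (simp add: fib)
  finally have "card (annS C) = CARD('a) * card (annS (insert c C))" .
  then show ?case using IH insert.hyps by (simp add: algebra_simps)
qed

lemma card_solutions:
  fixes A :: "'a::{field,finite}^'n^'m"
  shows "card {x. A *v x = v} * CARD('a) ^ rank A \<le> CARD('a) ^ CARD('n)"
proof -
  obtain B where B: "B \<subseteq> rows A" "vec.independent B" "rows A \<subseteq> vec.span B"
      "card B = vec.dim (rows A)"
    using vec.basis_exists by blast
  have fB: "finite B" by simp
  have rowdot: "(A *v x) $ i = dotv (row i A) x" for x i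
    by (simp add: matrix_vector_mult_def dotv_def row_def)
  have ker: "annS B = {x. A *v x = 0}"
  proof safe
    fix x assume "x \<in> annS B"
    then have "B \<subseteq> {u. dotv u x = 0}" by (auto simp: annS_def)
    then have "vec.span B \<subseteq> {u. dotv u x = 0}"
      by (rule vec.span_minimal[OF _ subspace_annih])
    then have "\<forall>i. dotv (row i A) x = 0" using B(3) by (auto simp: rows_def)
    then show "A *v x = 0" by (simp add: vec_eq_iff rowdot)
  next
    fix x assume "A *v x = 0"
    then have "\<forall>i. dotv (row i A) x = 0" by (simp add: vec_eq_iff rowdot)
    then show "x \<in> annS B" using B(1)
      unfolding annS_def rows_def by blast
  qed
  have c1: "card {x. A *v x = 0} * CARD('a) ^ rank A = CARD('a) ^ CARD('n)"
    using card_annS[OF fB B(2)] ker B(4) by (simp add: row_rank_def_gen)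
  have "card {x. A *v x = v} \<le> card {x. A *v x = 0}"
  proof (cases "\<exists>x0. A *v x0 = v")
    case True
    then obtain x0 where x0: "A *v x0 = v" by blast
    have "{x. A *v x = v} \<subseteq> (\<lambda>y. y + x0) ` {x. A *v x = 0}"
    proof
      fix x assume "x \<in> {x. A *v x = v}"
      then have "x - x0 \<in> {x. A *v x = 0}" using x0 by (simp add: matrix_vector_mult_diff_distrib)
      then show "x \<in> (\<lambda>y. y + x0) ` {x. A *v x = 0}" by (rule rev_image_eqI) simp
    qed
    then have "card {x. A *v x = v} \<le> card ((\<lambda>y. y + x0) ` {x. A *v x = 0})"
      by (rule card_mono[rotated]) simp
    also have "\<dots> \<le> card {x. A *v x = 0}" by (rule card_image_le) simp
    finally show ?thesis .
  next
    case False
    then show ?thesis by simp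
  qed
  then show ?thesis using c1 by (metis mult_le_mono1)
qed



lemma sum4: "(\<Sum>i<(4::nat). g i) = g 0 + g 1 + g 2 + g 3"
  for g :: "nat \<Rightarrow> 'b::comm_monoid_add"
  by (simp add: numeral_eq_Suc lessThan_Suc ac_simps)

lemma sum_lessThan_add: "(\<Sum>i<(a::nat)+b. g i) = (\<Sum>i<a. g i) + (\<Sum>i<b. g (a+i))"
  by (induction b) (simp_all add: add.assoc)

lemma sum_append_vec:
  fixes xs ys :: "('a::field^'n) list"
  shows "(\<Sum>i<length (xs@ys). c i *s (xs@ys)!i) =
    (\<Sum>i<length xs. c i *s xs!i) + (\<Sum>i<length ys. c (length xs + i) *s ys!i)"
proof -
  have "(\<Sum>i<length (xs@ys). c i *s (xs@ys)!i) =
    (\<Sum>i<length xs. c i *s (xs@ys)!i) + (\<Sum>i<length ys. c (length xs + i) *s (xs@ys)!(length xs + i))"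
    by (simp add: sum_lessThan_add)
  also have "(\<Sum>i<length xs. c i *s (xs@ys)!i) = (\<Sum>i<length xs. c i *s xs!i)"
    by (rule sum.cong) (auto simp: nth_append)
  finally show ?thesis by simp
qed

lemma length_concat4:
  "length (concat (map (\<lambda>M. [M *v w1, M *v w2, M *v w3, M *v w4]) Qs)) = 4 * length Qs"
  by (induction Qs) auto

lemma sum_concat4:
  fixes Qs :: "('a::field^'n^'n) list"
  shows "(\<Sum>i<length (concat (map (\<lambda>M. [M *v w1, M *v w2, M *v w3, M *v w4]) Qs)).
      c i *s (concat (map (\<lambda>M. [M *v w1, M *v w2, M *v w3, M *v w4]) Qs))!i) =
    (\<Sum>k<length Qs. c (4*k) *s (Qs!k *v w1) + c (4*k+1) *s (Qs!k *v w2)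
        + c (4*k+2) *s (Qs!k *v w3) + c (4*k+3) *s (Qs!k *v w4))"
proof (induction Qs arbitrary: c)
  case Nil
  then show ?case by simp
next
  case (Cons M Qs)
  have "concat (map (\<lambda>M. [M *v w1, M *v w2, M *v w3, M *v w4]) (M # Qs)) =
     [M *v w1, M *v w2, M *v w3, M *v w4] @ concat (map (\<lambda>M. [M *v w1, M *v w2, M *v w3, M *v w4]) Qs)"
    by simp
  let ?CQ = "concat (map (\<lambda>M. [M *v w1, M *v w2, M *v w3, M *v w4]) Qs)"
  have "(\<Sum>i<length (concat (map (\<lambda>M. [M *v w1, M *v w2, M *v w3, M *v w4]) (M # Qs))).
      c i *s (concat (map (\<lambda>M. [M *v w1, M *v w2, M *v w3, M *v w4]) (M # Qs)))!i)
    = (c 0 *s (M *v w1) + c 1 *s (M *v w2) + c 2 *s (M *v w3) + c 3 *s (M *v w4))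
      + (\<Sum>i<length ?CQ. c (4+i) *s ?CQ!i)"
  proof -
    have eq: "concat (map (\<lambda>M. [M *v w1, M *v w2, M *v w3, M *v w4]) (M # Qs)) =
      [M *v w1, M *v w2, M *v w3, M *v w4] @ ?CQ" by simp
    have l4: "length [M *v w1, M *v w2, M *v w3, M *v w4] = 4" by simp
    show ?thesis unfolding eq sum_append_vec l4 sum4 by simp
  qed
  also have "\<dots> = (c 0 *s (M *v w1) + c 1 *s (M *v w2) + c 2 *s (M *v w3) + c 3 *s (M *v w4))
      + (\<Sum>k<length Qs. c (4 + 4*k) *s (Qs!k *v w1) + c (4 + (4*k+1)) *s (Qs!k *v w2)
        + c (4 + (4*k+2)) *s (Qs!k *v w3) + c (4 + (4*k+3)) *s (Qs!k *v w4))"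
    unfolding Cons.IH[of "\<lambda>i. c (4 + i)"] ..
  also have "\<dots> = (\<Sum>k<length (M # Qs). c (4*k) *s ((M # Qs)!k *v w1) + c (4*k+1) *s ((M # Qs)!k *v w2)
        + c (4*k+2) *s ((M # Qs)!k *v w3) + c (4*k+3) *s ((M # Qs)!k *v w4))"
    by (simp only: length_Cons sum.lessThan_Suc_shift) (simp add: algebra_simps eval_nat_numeral)
  finally show ?case .
qed

lemma mat_comb_mult:
  fixes Qs :: "('a::field^'n^'n) list"
  shows "mat_comb lam Qs *v w = (\<Sum>k<length Qs. lam k *s (Qs!k *v w))"
  by (simp add: vec_eq_iff mat_comb_def matrix_vector_mult_def sum_component
      sum_distrib_left sum_distrib_right mult.assoc sum.swap[of _ UNIV])

lemma card_UNIV_times: "CARD('x \<times> 'y) = CARD('x) * CARD('y)"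
  by (metis UNIV_Times_UNIV card_cartesian_product)

lemma card_pair_bound:
  fixes A :: "'a::{field,finite}^'n^'n" and g :: "'b::finite \<Rightarrow> 'a^'n"
  shows "card {(x,y). A *v x + g y = 0} * CARD('a) ^ rank A \<le> CARD('b) * CARD('a) ^ CARD('n)"
proof -
  let ?S = "{(x,y). A *v x + g y = 0}"
  have "card ?S = (\<Sum>t\<in>UNIV. card {z\<in>?S. snd z = t})"
    by (rule card_fibers) simp
  also have "\<dots> = (\<Sum>t\<in>UNIV. card {x. A *v x = - g t})"
  proof (rule sum.cong)
    fix t assume "t \<in> (UNIV::'b set)"
    have "{z\<in>?S. snd z = t} = (\<lambda>x. (x,t)) ` {x. A *v x = - g t}"
      by (auto simp: eq_neg_iff_add_eq_0)
    then show "card {z\<in>?S. snd z = t} = card {x. A *v x = - g t}"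
      by (simp add: card_image inj_on_def)
  qed simp
  finally have "card ?S * CARD('a) ^ rank A = (\<Sum>t\<in>UNIV. card {x. A *v x = - g t} * CARD('a) ^ rank A)"
    by (simp add: sum_distrib_right)
  also have "\<dots> \<le> (\<Sum>t\<in>(UNIV::'b set). CARD('a) ^ CARD('n))"
    by (rule sum_mono) (rule card_solutions)
  finally show ?thesis by simp
qed

lemma card_Z4:
  fixes A0 A1 A2 A3 :: "'a::{field,finite}^'n^'n" and K :: "'a^'n"
  assumes "j < (4::nat)"
  and "j = 0 \<Longrightarrow> R \<le> rank A0" and "j = 1 \<Longrightarrow> R \<le> rank A1"
  and "j = 2 \<Longrightarrow> R \<le> rank A2" and "j = 3 \<Longrightarrow> R \<le> rank A3"
  shows "card {(w1,w2,w3,w4). K + A0 *v w1 + A1 *v w2 + A2 *v w3 + A3 *v w4 = 0}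
          * CARD('a) ^ R \<le> CARD('a) ^ (4 * CARD('n))"
proof -
  let ?Z = "{(w1::'a^'n,w2::'a^'n,w3::'a^'n,w4::'a^'n). K + A0 *v w1 + A1 *v w2 + A2 *v w3 + A3 *v w4 = 0}"
  let ?p = "CARD('a)" and ?n = "CARD('n)"
  have p0: "?p > 0" by simp
  have c3: "CARD(('a^'n) \<times> ('a^'n) \<times> ('a^'n)) = ?p ^ ?n * ?p ^ ?n * ?p ^ ?n"
    by (simp only: card_UNIV_times CARD_vec mult.assoc)
  have e4: "?p ^ (4 * ?n) = ?p ^ ?n * (?p ^ ?n * ?p ^ ?n * ?p ^ ?n)"
  proof -
    have "4 * ?n = ?n + (?n + (?n + ?n))" by simp
    then show ?thesis by (simp only: power_add)
  qed
  have main: "card ?Z * ?p ^ rank A \<le> ?p ^ (4 * ?n)"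
    if "?Z = h ` {(x,y). A *v x + g y = 0}" "inj h"
    for A :: "'a^'n^'n" and g :: "('a^'n) \<times> ('a^'n) \<times> ('a^'n) \<Rightarrow> 'a^'n"
       and h :: "('a^'n) \<times> (('a^'n) \<times> ('a^'n) \<times> ('a^'n)) \<Rightarrow> ('a^'n) \<times> ('a^'n) \<times> ('a^'n) \<times> ('a^'n)"
  proof -
    have "card ?Z = card {(x,y). A *v x + g y = 0}"
      using that by (simp add: card_image inj_on_subset)
    then show ?thesis using card_pair_bound[of A g] c3 e4 by (simp add: mult.commute)
  qed
  have R: "card ?Z * ?p ^ R \<le> ?p ^ (4 * ?n)"
    if "card ?Z * ?p ^ rank A \<le> ?p ^ (4 * ?n)" "R \<le> rank A" for A :: "'a^'n^'n"
  proof -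
    have "card ?Z * ?p ^ R \<le> card ?Z * ?p ^ rank A"
      using that(2) p0 by (simp add: power_increasing)
    then show ?thesis using that(1) by linarith
  qed
  consider "j = 0" | "j = 1" | "j = 2" | "j = 3" using assms(1) by linarith
  then show ?thesis
  proof cases
    case 1
    have "?Z = id ` {(x,y). A0 *v x + (\<lambda>(a,b,c). K + A1 *v a + A2 *v b + A3 *v c) y = 0}"
      by (auto simp: algebra_simps)
    from R[OF main[OF this] assms(2)[OF 1]] show ?thesis by simp
  next
    case 2
    have "?Z = (\<lambda>(x,a,b,c). (a,x,b,c)) ` {(x,y). A1 *v x + (\<lambda>(a,b,c). K + A0 *v a + A2 *v b + A3 *v c) y = 0}"
      by (auto simp: algebra_simps image_iff)
    moreover have "inj (\<lambda>(x::'a^'n,a::'a^'n,b::'a^'n,c::'a^'n). (a,x,b,c))" by (auto simp: inj_on_def)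
    ultimately show ?thesis using R main assms(3)[OF 2] by blast
  next
    case 3
    have "?Z = (\<lambda>(x,a,b,c). (a,b,x,c)) ` {(x,y). A2 *v x + (\<lambda>(a,b,c). K + A0 *v a + A1 *v b + A3 *v c) y = 0}"
      by (auto simp: algebra_simps image_iff)
    moreover have "inj (\<lambda>(x::'a^'n,a::'a^'n,b::'a^'n,c::'a^'n). (a,b,x,c))" by (auto simp: inj_on_def)
    ultimately show ?thesis using R main assms(4)[OF 3] by blast
  next
    case 4
    have "?Z = (\<lambda>(x,a,b,c). (a,b,c,x)) ` {(x,y). A3 *v x + (\<lambda>(a,b,c). K + A0 *v a + A1 *v b + A2 *v c) y = 0}"
      by (auto simp: algebra_simps image_iff)
    moreover have "inj (\<lambda>(x::'a^'n,a::'a^'n,b::'a^'n,c::'a^'n). (a,b,c,x))" by (auto simp: inj_on_def)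
    ultimately show ?thesis using R main assms(5)[OF 4] by blast
  qed
qed

lemma qf_rank_le:
  fixes Qs :: "('a::{field,finite}^'n^'n) list"
  assumes "k < length Qs" "lam k \<noteq> 0"
  shows "qf_rank Qs \<le> rank (mat_comb lam Qs)"
proof -
  have ne: "Qs \<noteq> []" using assms by auto
  let ?X = "{rank (mat_comb lam Qs) | lam. \<exists>k<length Qs. lam k \<noteq> 0}"
  have "?X \<subseteq> range (rank :: 'a^'n^'n \<Rightarrow> nat)" by auto
  then have "finite ?X" by (rule finite_subset) simp
  moreover have "rank (mat_comb lam Qs) \<in> ?X" using assms by blast
  ultimately show ?thesis using ne by (simp add: qf_rank_def)
qed

theorem mainTheorem7:
  fixes p :: nat and r :: real
    and Ls :: "('a::{field,finite} ^ 'n) list" and Qs :: "('a ^ 'n ^ 'n) list"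
  assumes "prime p" and "odd p" and "CARD('a) = p"
    and "r \<ge> 0"
    and "quadratic_factor Ls Qs"
    and "real (qf_rank Qs) \<ge> r"
  shows "real (card {(w1 :: 'a ^ 'n, w2 :: 'a ^ 'n, w3 :: 'a ^ 'n, w4 :: 'a ^ 'n).
            \<not> lin_indep_list (Ls @ concat (map (\<lambda>M. [M *v w1, M *v w2, M *v w3, M *v w4]) Qs))})
         \<le> 14 * real p powr (real (4 * CARD('n) + length Ls + 4 * length Qs) - r)"
proof -
  let ?Bad = "{(w1 :: 'a ^ 'n, w2 :: 'a ^ 'n, w3 :: 'a ^ 'n, w4 :: 'a ^ 'n).
            \<not> lin_indep_list (Ls @ concat (map (\<lambda>M. [M *v w1, M *v w2, M *v w3, M *v w4]) Qs))}"
  define l where "l = length Ls"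
  define q where "q = length Qs"
  define N where "N = l + 4 * q"
  define n where "n = CARD('n)"
  define r0 where "r0 = qf_rank Qs"
  define Lam where "Lam c j = mat_comb (\<lambda>k. c (l + 4*k + j)) Qs" for c :: "nat \<Rightarrow> 'a" and j
  define K where "K c = (\<Sum>i<l. c i *s Ls!i)" for c :: "nat \<Rightarrow> 'a"
  define Z where "Z c = {(w1 :: 'a ^ 'n, w2 :: 'a ^ 'n, w3 :: 'a ^ 'n, w4 :: 'a ^ 'n).
      K c + Lam c 0 *v w1 + Lam c 1 *v w2 + Lam c 2 *v w3 + Lam c 3 *v w4 = 0}" for c
  define C where "C = {c \<in> PiE {..<N} (\<lambda>_. UNIV::'a set). \<exists>j<4. \<exists>k<q. c (l+4*k+j) \<noteq> 0}"
  have p2: "p \<ge> 2" using assms(1) by (simp add: prime_ge_2_nat)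
  have indL: "lin_indep_list Ls" using assms(5) by (simp add: quadratic_factor_def)
  have E: "(\<Sum>i<length (Ls @ concat (map (\<lambda>M. [M *v w1, M *v w2, M *v w3, M *v w4]) Qs)).
       c i *s (Ls @ concat (map (\<lambda>M. [M *v w1, M *v w2, M *v w3, M *v w4]) Qs))!i)
     = K c + Lam c 0 *v w1 + Lam c 1 *v w2 + Lam c 2 *v w3 + Lam c 3 *v w4" for c w1 w2 w3 w4
    unfolding sum_append_vec sum_concat4 K_def Lam_def mat_comb_mult
    by (simp add: sum.distrib algebra_simps l_def)
  have Zc: "card (Z c) * p ^ r0 \<le> p ^ (4 * n)" if cC: "c \<in> C" for c
  proof -
    obtain j k where jk: "j < 4" "k < q" "c (l+4*k+j) \<noteq> 0" using cC unfolding C_def by blast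
    have rk: "r0 \<le> rank (Lam c j)"
      unfolding r0_def Lam_def by (rule qf_rank_le[of k]) (use jk in \<open>auto simp: q_def\<close>)
    show ?thesis unfolding Z_def n_def assms(3)[symmetric]
      by (rule card_Z4[OF jk(1)]) (use rk in auto)
  qed
  have cover: "?Bad \<subseteq> (\<Union>c\<in>C. Z c)"
  proof safe
    fix w1 w2 w3 w4 :: "'a^'n"
    let ?F = "Ls @ concat (map (\<lambda>M. [M *v w1, M *v w2, M *v w3, M *v w4]) Qs)"
    assume "\<not> lin_indep_list ?F"
    then obtain c i where c: "(\<Sum>i<length ?F. c i *s ?F!i) = 0" and i: "i < length ?F" "c i \<noteq> 0"
      unfolding lin_indep_list_def by blast
    have lenF: "length ?F = N" by (simp add: length_concat4 N_def l_def q_def)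
    define c' where "c' = restrict c {..<N}"
    have "(\<Sum>i<length ?F. c' i *s ?F!i) = (\<Sum>i<length ?F. c i *s ?F!i)"
      unfolding lenF by (rule sum.cong) (auto simp: c'_def)
    then have z: "K c' + Lam c' 0 *v w1 + Lam c' 1 *v w2 + Lam c' 2 *v w3 + Lam c' 3 *v w4 = 0"
      using c E by simp
    have "\<exists>j<4. \<exists>k<q. c' (l+4*k+j) \<noteq> 0"
    proof (rule ccontr)
      assume H: "\<not> (\<exists>j<4. \<exists>k<q. c' (l+4*k+j) \<noteq> 0)"
      have L0: "Lam c' j = 0" if "j < 4" for j
        using H that unfolding Lam_def mat_comb_def by (simp add: vec_eq_iff q_def)
      have "K c' = 0" using z L0 by simp
      then have Lz: "\<forall>i<l. c' i = 0" using indL unfolding lin_indep_list_def K_def l_def by blast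
      show False
      proof (cases "i < l")
        case True
        then show ?thesis using Lz i lenF by (simp add: c'_def N_def)
      next
        case False
        define k where "k = (i - l) div 4"
        define j where "j = (i - l) mod 4"
        have "i = l + 4*k + j" using False by (simp add: k_def j_def)
        moreover have "k < q" using i lenF False by (simp add: k_def N_def) linarith?
        moreover have "j < 4" by (simp add: j_def)
        ultimately have "c' i = 0" using H by blast
        moreover have "c' i = c i" using i lenF by (simp add: c'_def)
        ultimately show ?thesis using i by simp
      qed
    qed
    moreover have "c' \<in> PiE {..<N} (\<lambda>_. UNIV)" by (simp add: c'_def)
    ultimately have "c' \<in> C" by (simp add: C_def)
    moreover have "(w1, w2, w3, w4) \<in> Z c'" using z by (simp add: Z_def)
    ultimately show "(w1, w2, w3, w4) \<in> (\<Union>c\<in>C. Z c)" by blast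
  qed
  have CPi: "C \<subseteq> PiE {..<N} (\<lambda>_. UNIV::'a set)" unfolding C_def by blast
  have finC: "finite C" by (rule finite_subset[OF CPi]) (simp add: finite_PiE)
  have cardC: "card C \<le> p ^ N"
  proof -
    have "card C \<le> card (PiE {..<N} (\<lambda>_. UNIV::'a set))"
      by (rule card_mono[OF _ CPi]) (simp add: finite_PiE)
    also have "\<dots> = p ^ N" by (simp add: card_PiE assms(3))
    finally show ?thesis .
  qed
  have "card ?Bad \<le> card (\<Union>c\<in>C. Z c)" by (rule card_mono[OF _ cover]) (rule finite_subset[OF subset_UNIV], simp)
  also have "\<dots> \<le> (\<Sum>c\<in>C. card (Z c))" by (rule card_UN_le[OF finC])
  finally have "card ?Bad * p ^ r0 \<le> (\<Sum>c\<in>C. card (Z c)) * p ^ r0" by simp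
  also have "\<dots> = (\<Sum>c\<in>C. card (Z c) * p ^ r0)" by (simp add: sum_distrib_right)
  also have "\<dots> \<le> (\<Sum>c\<in>C. p ^ (4 * n))" by (rule sum_mono) (rule Zc)
  also have "\<dots> = card C * p ^ (4 * n)" by simp
  also have "\<dots> \<le> p ^ N * p ^ (4 * n)" using cardC by simp
  also have "\<dots> = p ^ (4 * n + l + 4 * q)" by (simp add: N_def power_add[symmetric] algebra_simps)
  finally have nat_bd: "card ?Bad * p ^ r0 \<le> p ^ (4 * n + l + 4 * q)" .
  define e where "e = 4 * n + l + 4 * q"
  define B where "B = card ?Bad"
  have pr: "real p > 0" using p2 by simp
  have h1: "real (B * p ^ r0) \<le> real (p ^ e)" using nat_bd unfolding e_def B_def of_nat_le_iff .
  then have "real B * real p ^ r0 \<le> real p ^ e" unfolding of_nat_mult of_nat_power .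
  then have "real B \<le> real p ^ e / real p ^ r0"
    using pr by (simp add: pos_le_divide_eq)
  also have "\<dots> = real p powr (real e - real r0)"
    using pr by (simp add: powr_diff powr_realpow)
  also have "\<dots> \<le> real p powr (real e - r)"
    using assms(6) p2 unfolding r0_def by (intro powr_mono) auto
  also have "\<dots> \<le> 14 * real p powr (real e - r)" by simp
  finally show ?thesis unfolding e_def n_def l_def q_def B_def .
qed

end
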